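(* Consider the two-SP new-spectrum model described in the context, let $a=N_f\lambda_S^{1/\alpha-1}$ and $T=\frac{(B_1^o+B_2^o)a}{N_m}$. 1. If $B>T$, then $\mathrm{SW}_{\mathrm{w}}^{\mathrm{NE}}\le\mathrm{SW}_{\mathrm{w}}^{*}<\mathrm{SW}_{\mathrm{wo}}^{*}$, and $\mathrm{SW}_{\mathrm{w}}^{\mathrm{NE}}=\mathrm{SW}_{\mathrm{w}}^{*}$ if and only if, for both $i=1,2$, $$\lambda_S(R_S^0)^{-\alpha}-(R_M^0)^{-\alpha}-\frac{\alpha\lambda_S^2B_i^nR_0}{N_f}(R_S^0)^{-\alpha-1}+\frac{\alpha B_i^oR_0}{N_m}(R_M^0)^{-\alpha-1}\le0,$$ where $R_S^0=\frac{\lambda_S(B_1^n+B_2^n)R_0}{N_f}$ and $R_M^0=\frac{(B_1^o+B_2^o)R_0}{N_m}$. 2. If $B\le T$, then $\mathrm{SW}_{\mathrm{w}}^{\mathrm{NE}}\le\mathrm{SW}_{\mathrm{w}}^{*}=\mathrm{SW}_{\mathrm{wo}}^{*}$, and $\mathrm{SW}_{\mathrm{w}}^{\mathrm{NE}}=\mathrm{SW}_{\mathrm{w}}^{*}=\mathrm{SW}_{\mathrm{wo}}^{*}$ if and only if $$B_1^n\in\Big[B-\frac{B_2^oa}{N_m},\ \frac{B_1^oa}{N_m}\Big],\qquad B_2^n=B-B_1^n.$$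
   Context: Two service providers (SPs) $i=1,2$. SP $i$ has an initial licensed bandwidth $B_i^o>0$ and receives a share $B_i^n\ge0$ of newly available bandwidth $B>0$, with $B_1^n+B_2^n=B$. SP $i$'s total bandwidth is $B_i=B_i^o+B_i^n$, which it splits into macro-cell bandwidth $B_{i,M}\ge0$ and small-cell bandwidth $B_{i,S}$ with $B_{i,M}+B_{i,S}\le B_i$; the new bandwidth may only be used in small-cells, which is imposed as the regulatory constraint $B_{i,S}\ge B_{i,S}^0:=B_i^n$. Parameters: $R_0>0$, $\lambda_S>1$, a mass $N_m>0$ of mobile users (served only by macro-cells) and a mass $N_f>0$ of fixed users, each with utility $u(r)=r^{1-\alpha}/(1-\alpha)$, $\alpha\in(0,1)$. Second-stage prices are market-clearing: with $R_M=\frac{(B_{1,M}+B_{2,M})R_0}{N_m}$ and $R_S=\frac{\lambda_S(B_{1,S}+B_{2,S})R_0}{N_f}$, prices are $R_M^{-\alpha}$ (macro) and $R_S^{-\alpha}$ (small), mobile users receive rate $R_M$ and fixed users rate $R_S$. SP $i$'s payoff in the bandwidth game is $S_i=\lambda_SB_{i,S}R_0R_S^{-\alpha}+B_{i,M}R_0R_M^{-\alpha}$. Social welfare is $\mathrm{SW}=N_mu(R_M)+N_fu(R_S)$. For a given split $(B_1^n,B_2^n)$: $\mathrm{SW}_{\mathrm{wo}}^{*}$ is the maximal social welfare over all bandwidth allocations without the regulatory constraints (equal to the equilibrium social welfare of the unconstrained game); $\mathrm{SW}_{\mathrm{w}}^{*}$ is the maximal social welfare over all bandwidth allocations satisfying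 the regulatory constraints $B_{i,S}\ge B_i^n$; and $\mathrm{SW}_{\mathrm{w}}^{\mathrm{NE}}$ is the social welfare at the (unique) Nash equilibrium of the bandwidth game with the regulatory constraints. *)

theory Defs
  imports Complex_Main
begin

text \<open>A strategy of a service provider is a pair (macro-cell bandwidth, small-cell bandwidth).
  Model parameters: R0, lamS (\<lambda>_S), Nm, Nf, al (\<alpha>).\<close>

type_synonym strat = "real \<times> real"

definition feasible_wo :: "real \<Rightarrow> strat \<Rightarrow> bool" where
  "feasible_wo Bi s \<longleftrightarrow> fst s \<ge> 0 \<and> snd s \<ge> 0 \<and> fst s + snd s \<le> Bi"

definition feasible_w :: "real \<Rightarrow> real \<Rightarrow> strat \<Rightarrow> bool" where
  "feasible_w Bi Bin s \<longleftrightarrow> feasible_wo Bi s \<and> snd s \<ge> Bin"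

definition rateM :: "real \<Rightarrow> real \<Rightarrow> strat \<Rightarrow> strat \<Rightarrow> real" where
  "rateM R0 Nm s1 s2 = (fst s1 + fst s2) * R0 / Nm"

definition rateS :: "real \<Rightarrow> real \<Rightarrow> real \<Rightarrow> strat \<Rightarrow> strat \<Rightarrow> real" where
  "rateS R0 lamS Nf s1 s2 = lamS * (snd s1 + snd s2) * R0 / Nf"

text \<open>Payoff of the SP playing s against an opponent playing t
  (the model is symmetric in the two SPs).\<close>
definition payoff :: "real \<Rightarrow> real \<Rightarrow> real \<Rightarrow> real \<Rightarrow> real \<Rightarrow> strat \<Rightarrow> strat \<Rightarrow> real" where
  "payoff R0 lamS Nm Nf al s t =
     lamS * snd s * R0 * (rateS R0 lamS Nf s t) powr (- al)
     + fst s * R0 * (rateM R0 Nm s t) powr (- al)"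

definition util :: "real \<Rightarrow> real \<Rightarrow> real" where
  "util al r = r powr (1 - al) / (1 - al)"

definition SW :: "real \<Rightarrow> real \<Rightarrow> real \<Rightarrow> real \<Rightarrow> real \<Rightarrow> strat \<Rightarrow> strat \<Rightarrow> real" where
  "SW R0 lamS Nm Nf al s1 s2 =
     Nm * util al (rateM R0 Nm s1 s2) + Nf * util al (rateS R0 lamS Nf s1 s2)"

definition SW_opt_wo :: "real \<Rightarrow> real \<Rightarrow> real \<Rightarrow> real \<Rightarrow> real \<Rightarrow> real \<Rightarrow> real \<Rightarrow> real" where
  "SW_opt_wo R0 lamS Nm Nf al B1 B2 =
     Sup {SW R0 lamS Nm Nf al s1 s2 | s1 s2. feasible_wo B1 s1 \<and> feasible_wo B2 s2}"

definition SW_opt_w :: "real \<Rightarrow> real \<Rightarrow> real \<Rightarrow> real \<Rightarrow> real \<Rightarrow> real \<Rightarrow> real \<Rightarrow> real \<Rightarrow> real \<Rightarrow> real" where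
  "SW_opt_w R0 lamS Nm Nf al B1 B2 B1n B2n =
     Sup {SW R0 lamS Nm Nf al s1 s2 | s1 s2. feasible_w B1 B1n s1 \<and> feasible_w B2 B2n s2}"

definition is_NE_w :: "real \<Rightarrow> real \<Rightarrow> real \<Rightarrow> real \<Rightarrow> real \<Rightarrow> real \<Rightarrow> real \<Rightarrow> real \<Rightarrow> real
    \<Rightarrow> strat \<Rightarrow> strat \<Rightarrow> bool" where
  "is_NE_w R0 lamS Nm Nf al B1 B2 B1n B2n s1 s2 \<longleftrightarrow>
     feasible_w B1 B1n s1 \<and> feasible_w B2 B2n s2 \<and>
     (\<forall>s1'. feasible_w B1 B1n s1' \<longrightarrow>
        payoff R0 lamS Nm Nf al s1' s2 \<le> payoff R0 lamS Nm Nf al s1 s2) \<and>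
     (\<forall>s2'. feasible_w B2 B2n s2' \<longrightarrow>
        payoff R0 lamS Nm Nf al s2' s1 \<le> payoff R0 lamS Nm Nf al s2 s1)"

end

theory Submission
  imports Defs "HOL-Analysis.Convex"
begin

lemma util_tan:
  fixes al r r0 :: real
  assumes al: "0 < al" "al < 1" and r: "r \<ge> 0" and r0: "r0 > 0"
  shows "util al r \<le> util al r0 + r0 powr (-al) * (r - r0)"
proof -
  define p where "p = r0 powr (-al)"
  have p0: "p > 0" using r0 by (simp add: p_def)
  have e1: "r0 powr (1-al) = r0 * p"
    unfolding p_def using r0 powr_add[of r0 1 "-al"] by simp
  have e2: "r0 powr al * p = 1"
    unfolding p_def using r0 powr_add[of r0 al "-al"] by simp
  show ?thesis
  proof (cases "r = 0")
    case True
    have "0 \<le> r0 * p * al / (1 - al)" using r0 p0 al by simp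
    then show ?thesis using True al unfolding util_def e1 p_def[symmetric]
      by (simp add: field_simps)
  next
    case False
    hence rp: "r > 0" using r by simp
    have Y: "r powr (1-al) * r0 powr al \<le> (1-al)*r + al*r0"
      using Youngs_inequality_0[of "1-al" al r r0] al rp r0 by simp
    have "r powr (1-al) = r powr (1-al) * (r0 powr al * p)" using e2 by simp
    also have "\<dots> = (r powr (1-al) * r0 powr al) * p" by simp
    also have "\<dots> \<le> ((1-al)*r + al*r0) * p" using Y p0 by (intro mult_right_mono) simp_all
    finally have "r powr (1-al) \<le> ((1-al)*r + al*r0) * p" .
    hence "r powr (1-al) / (1-al) \<le> ((1-al)*r + al*r0) * p / (1-al)"
      using al by (simp add: divide_right_mono)
    also have "\<dots> = r0 * p / (1-al) + p * (r - r0)" using al by (simp add: field_simps)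
    finally show ?thesis unfolding util_def e1 p_def[symmetric] .
  qed
qed

locale mdl =
  fixes R0 lamS Nm Nf al :: real
  assumes R0: "R0 > 0" and lamS: "lamS > 1" and Nm: "Nm > 0" and Nf: "Nf > 0"
    and al0: "0 < al" and al1: "al < 1"
begin

definition qS :: "real \<Rightarrow> real" where "qS Y = lamS * (lamS*Y*R0/Nf) powr (-al)"
definition qM :: "real \<Rightarrow> real" where "qM X = (X*R0/Nm) powr (-al)"
definition F :: "real \<Rightarrow> real \<Rightarrow> real" where
  "F X Y = Nm * util al (X*R0/Nm) + Nf * util al (lamS*Y*R0/Nf)"
definition Gm :: "real \<Rightarrow> real \<Rightarrow> real \<Rightarrow> real \<Rightarrow> real" where
  "Gm x m Y X = qS Y * (1 - al*x/Y) - qM X * (1 - al*m/X)"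

lemma SW_F: "SW R0 lamS Nm Nf al s1 s2 = F (fst s1 + fst s2) (snd s1 + snd s2)"
  unfolding SW_def F_def rateM_def rateS_def by simp

lemma qS_pos: "Y > 0 \<Longrightarrow> qS Y > 0" unfolding qS_def using lamS R0 Nf by simp
lemma qM_pos: "X > 0 \<Longrightarrow> qM X > 0" unfolding qM_def using R0 Nm by simp

lemma qS_mono: "0 < Y \<Longrightarrow> Y < Y' \<Longrightarrow> qS Y' < qS Y"
  unfolding qS_def using lamS R0 Nf al0
  by (intro mult_strict_left_mono powr_less_mono2_neg) (simp_all add: divide_strict_right_mono)
lemma qM_mono: "0 < X \<Longrightarrow> X < X' \<Longrightarrow> qM X' < qM X"
  unfolding qM_def using R0 Nm al0
  by (intro powr_less_mono2_neg) (simp_all add: divide_strict_right_mono)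

lemma F_tan:
  assumes "X \<ge> 0" "Y \<ge> 0" "X0 > 0" "Y0 > 0"
  shows "F X Y \<le> F X0 Y0 + R0 * (qM X0 * (X - X0) + qS Y0 * (Y - Y0))"
proof -
  have 1: "util al (X*R0/Nm) \<le> util al (X0*R0/Nm) + (X0*R0/Nm) powr (-al) * (X*R0/Nm - X0*R0/Nm)"
    using assms R0 Nm al0 al1 by (intro util_tan) simp_all
  have 2: "util al (lamS*Y*R0/Nf) \<le> util al (lamS*Y0*R0/Nf) + (lamS*Y0*R0/Nf) powr (-al) * (lamS*Y*R0/Nf - lamS*Y0*R0/Nf)"
    using assms R0 Nf lamS al0 al1 by (intro util_tan) simp_all
  have "F X Y \<le> Nm * (util al (X0*R0/Nm) + (X0*R0/Nm) powr (-al) * (X*R0/Nm - X0*R0/Nm))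
      + Nf * (util al (lamS*Y0*R0/Nf) + (lamS*Y0*R0/Nf) powr (-al) * (lamS*Y*R0/Nf - lamS*Y0*R0/Nf))"
    unfolding F_def using 1 2 Nm Nf by (intro add_mono mult_left_mono) simp_all
  also have "\<dots> = F X0 Y0 + R0 * (qM X0 * (X - X0) + qS Y0 * (Y - Y0))"
    unfolding F_def qM_def qS_def using Nm Nf by (simp add: field_simps)
  finally show ?thesis .
qed

lemma F_strict:
  assumes "X \<ge> 0" "Y \<ge> 0" "X0 > 0" "Y0 > 0" "X + Y = X0 + Y0"
    and "(Y - Y0) * (qS Y0 - qM X0) < 0"
  shows "F X Y < F X0 Y0"
proof -
  have "qM X0 * (X - X0) + qS Y0 * (Y - Y0) = (Y - Y0) * (qS Y0 - qM X0)"
  proof -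
    have h: "X - X0 = Y0 - Y" using assms(5) by linarith
    show ?thesis by (simp only: h) (simp add: algebra_simps)
  qed
  hence "R0 * (qM X0 * (X - X0) + qS Y0 * (Y - Y0)) < 0"
    using assms(6) R0 by (simp add: mult_pos_neg)
  with F_tan[OF assms(1-4)] show ?thesis by linarith
qed

lemma powr_m1: "p > 0 \<Longrightarrow> p powr (c - 1) = p powr c / (p::real)"
  by (simp add: powr_diff)

lemma G_eq:
  assumes "Y > 0" "X > 0"
  shows "lamS * (lamS*Y*R0/Nf) powr (-al) - (X*R0/Nm) powr (-al)
      - al*lamS\<^sup>2*x*R0/Nf * (lamS*Y*R0/Nf) powr (-al-1)
      + al*m*R0/Nm*(X*R0/Nm) powr (-al-1) = Gm x m Y X"
proof -
  have S: "lamS*Y*R0/Nf > 0" using assms lamS R0 Nf by simp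
  have M: "X*R0/Nm > 0" using assms R0 Nm by simp
  define PS where "PS = (lamS*Y*R0/Nf) powr (-al)"
  define PM where "PM = (X*R0/Nm) powr (-al)"
  have "lamS * PS - PM - al*lamS\<^sup>2*x*R0/Nf * (PS / (lamS*Y*R0/Nf))
      + al*m*R0/Nm*(PM / (X*R0/Nm)) = lamS * PS * (1 - al*x/Y) - PM * (1 - al*m/X)"
    using assms lamS R0 Nf Nm by (simp add: field_simps power2_eq_square)
  then show ?thesis unfolding Gm_def qS_def qM_def powr_m1[OF S] powr_m1[OF M] PS_def PM_def
    by simp
qed

lemma deriv_MS:
  assumes "m + m' > 0" "x + x' > 0"
  shows "((\<lambda>\<tau>. payoff R0 lamS Nm Nf al (m-\<tau>, x+\<tau>) (m',x')) has_real_derivative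
     R0 * Gm x m (x+x') (m+m')) (at 0)"
proof -
  have p1: "0 < R0 * m + R0 * m'" using assms R0 by (simp add: distrib_left[symmetric])
  have "R0 * (lamS * x) + R0 * (lamS * x') = (R0*lamS)*(x+x')" by (simp add: algebra_simps)
  hence p2: "0 < R0 * (lamS * x) + R0 * (lamS * x')" using assms R0 lamS by simp
  have "((\<lambda>\<tau>. payoff R0 lamS Nm Nf al (m-\<tau>, x+\<tau>) (m',x')) has_real_derivative
     R0 * (lamS * (lamS*(x+x')*R0/Nf) powr (-al) - ((m+m')*R0/Nm) powr (-al)
      - al*lamS\<^sup>2*x*R0/Nf * (lamS*(x+x')*R0/Nf) powr (-al-1)
      + al*m*R0/Nm * ((m+m')*R0/Nm) powr (-al-1))) (at 0)"
    unfolding payoff_def rateS_def rateM_def fst_conv snd_conv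
    using assms R0 Nm Nf lamS p1 p2
    apply (auto intro!: derivative_eq_intros)
    apply (simp add: field_simps power2_eq_square)
    done
  then show ?thesis using G_eq[of "x+x'" "m+m'" x m] assms by simp
qed

lemma deriv_S:
  assumes "x + x' > 0"
  shows "((\<lambda>\<tau>. payoff R0 lamS Nm Nf al (m, x+\<tau>) (m',x')) has_real_derivative
     R0 * qS (x+x') * (1 - al*x/(x+x'))) (at 0)"
proof -
  define S0 where "S0 = lamS*(x+x')*R0/Nf"
  define c where "c = lamS*R0/Nf"
  define K where "K = m*R0*((m+m')*R0/Nm) powr (-al)"
  have S0: "S0 > 0" unfolding S0_def using assms lamS R0 Nf by simp
  have fe: "(\<lambda>\<tau>. payoff R0 lamS Nm Nf al (m, x+\<tau>) (m',x')) =
     (\<lambda>\<tau>. lamS*R0*(x+\<tau>)*(S0 + c*\<tau>) powr (-al) + K)"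
  proof
    fix \<tau>
    have "lamS*((x+\<tau>)+x')*R0/Nf = S0 + c*\<tau>" unfolding S0_def c_def by (simp add: add_divide_distrib algebra_simps)
    then show "payoff R0 lamS Nm Nf al (m, x+\<tau>) (m',x') = lamS*R0*(x+\<tau>)*(S0 + c*\<tau>) powr (-al) + K"
      unfolding payoff_def rateS_def rateM_def K_def by simp
  qed
  have d: "((\<lambda>\<tau>. lamS*R0*(x+\<tau>)*(S0 + c*\<tau>) powr (-al) + K) has_real_derivative
     lamS*R0*(S0 powr (-al)) + lamS*R0*x*((-al) * S0 powr (-al - 1) * c)) (at 0)"
    using S0 by (auto intro!: derivative_eq_intros)
  have "lamS*R0*(S0 powr (-al)) + lamS*R0*x*((-al) * S0 powr (-al - 1) * c)
      = R0 * qS (x+x') * (1 - al*x/(x+x'))"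
  proof -
    define P where "P = S0 powr (-al)"
    have cS: "c / S0 = 1/(x+x')" unfolding S0_def c_def using assms lamS R0 Nf by simp
    have "lamS*R0*P + lamS*R0*x*((-al) * (P / S0) * c) = lamS*R0*P - lamS*R0*x*al*P*(c/S0)"
      using S0 by (simp add: field_simps)
    also have "\<dots> = R0 * (lamS * P) * (1 - al*x/(x+x'))" unfolding cS using assms
      by (simp add: field_simps)
    finally have "lamS*R0*P + lamS*R0*x*((-al) * (P / S0) * c) = R0 * (lamS * P) * (1 - al*x/(x+x'))" .
    moreover have qq: "qS (x+x') = lamS * P" unfolding qS_def P_def S0_def by simp
    ultimately show ?thesis unfolding powr_m1[OF S0] qq P_def[symmetric] by simp
  qed
  with d show ?thesis unfolding fe by simp
qed

lemma neg_powr_less_iff: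
  assumes "p > 0" "q > 0" "c < (0::real)"
  shows "p powr c < q powr c \<longleftrightarrow> q < p"
  using assms powr_less_mono2_neg[of c p q] powr_less_mono2_neg[of c q p]
  by (cases p q rule: linorder_cases) auto

lemma cmp:
  assumes a: "a = Nf * lamS powr (1/al - 1)" and X: "X > 0" and Y: "Y > 0"
  shows "qS Y < qM X \<longleftrightarrow> a*X < Nm*Y" and "qS Y = qM X \<longleftrightarrow> a*X = Nm*Y"
proof -
  define k where "k = lamS powr (-1/al) * lamS * R0/Nf"
  have k0: "k > 0" unfolding k_def using lamS R0 Nf by simp
  have l1: "(lamS powr (-1/al)) powr (-al) = lamS" using al0 lamS by (simp add: powr_powr)
  have qS': "qS Y = (k*Y) powr (-al)"
  proof -
    have "k*Y = lamS powr (-1/al) * (lamS*Y*R0/Nf)" unfolding k_def by simp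
    hence "(k*Y) powr (-al) = (lamS powr (-1/al)) powr (-al) * (lamS*Y*R0/Nf) powr (-al)"
      using lamS Y R0 Nf powr_mult[of "lamS powr (-1/al)" "lamS*Y*R0/Nf" "-al"] by simp
    then show ?thesis unfolding qS_def l1 by simp
  qed
  have ak: "a*k = R0"
  proof -
    have "lamS powr (1/al - 1) * lamS powr (-1/al) = lamS powr (-1)"
      using powr_add[of lamS "1/al - 1" "-1/al"] by (simp add: diff_divide_distrib)
    also have "\<dots> = 1 / lamS" using lamS by (simp add: powr_minus_divide)
    finally have "lamS powr (1/al - 1) * lamS powr (-1/al) = 1 / lamS" .
    hence "a*k = Nf * (1/lamS) * lamS * R0 / Nf" unfolding a k_def by (simp add: algebra_simps)
    then show ?thesis using Nf lamS by simp
  qed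
  have kY: "k*Y > 0" using k0 Y by simp
  have MX: "X*R0/Nm > 0" using X R0 Nm by simp
  have e: "X*R0/Nm < k*Y \<longleftrightarrow> a*X < Nm*Y"
  proof -
    have "X*R0/Nm < k*Y \<longleftrightarrow> X*R0 < k*Y*Nm" using Nm by (simp add: pos_divide_less_eq)
    also have "\<dots> \<longleftrightarrow> k*(a*X) < k*(Nm*Y)" unfolding ak[symmetric] by (simp add: algebra_simps)
    also have "\<dots> \<longleftrightarrow> a*X < Nm*Y" using k0 by simp
    finally show ?thesis .
  qed
  have e2: "X*R0/Nm = k*Y \<longleftrightarrow> a*X = Nm*Y"
  proof -
    have "X*R0/Nm = k*Y \<longleftrightarrow> X*R0 = k*Y*Nm" using Nm by (simp add: divide_eq_eq)
    also have "\<dots> \<longleftrightarrow> k*(a*X) = k*(Nm*Y)" unfolding ak[symmetric] by (simp add: algebra_simps)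
    also have "\<dots> \<longleftrightarrow> a*X = Nm*Y" using k0 by simp
    finally show ?thesis .
  qed
  show "qS Y < qM X \<longleftrightarrow> a*X < Nm*Y"
    unfolding qS' qM_def using neg_powr_less_iff[OF kY MX, of "-al"] al0 e by simp
  have na: "-al < 0" using al0 by simp
  have i1: "(k*Y) powr (-al) < (X*R0/Nm) powr (-al) \<longleftrightarrow> X*R0/Nm < k*Y"
    using neg_powr_less_iff[OF kY MX na] .
  have i2: "(X*R0/Nm) powr (-al) < (k*Y) powr (-al) \<longleftrightarrow> k*Y < X*R0/Nm"
    using neg_powr_less_iff[OF MX kY na] .
  have "qS Y = qM X \<longleftrightarrow> X*R0/Nm = k*Y"
    unfolding qS' qM_def using i1 i2
    by (cases "X*R0/Nm" "k*Y" rule: linorder_cases) auto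
  then show "qS Y = qM X \<longleftrightarrow> a*X = Nm*Y" using e2 by simp
qed

definition BR :: "real \<Rightarrow> real \<Rightarrow> strat \<Rightarrow> strat \<Rightarrow> bool" where
  "BR Bi Bin s t \<longleftrightarrow> feasible_w Bi Bin s \<and>
     (\<forall>s'. feasible_w Bi Bin s' \<longrightarrow> payoff R0 lamS Nm Nf al s' t \<le> payoff R0 lamS Nm Nf al s t)"

lemma NE_BR: "is_NE_w R0 lamS Nm Nf al B1 B2 B1n B2n s1 s2 \<Longrightarrow> BR B1 B1n s1 s2 \<and> BR B2 B2n s2 s1"
  by (simp add: is_NE_w_def BR_def)

lemma BR_full:
  assumes br: "BR Bi Bin (m,x) (m',x')" and x': "x' \<ge> 0" and Y: "x + x' > 0"
  shows "m + x = Bi"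
proof (rule ccontr)
  assume ne: "m + x \<noteq> Bi"
  from br have f: "m \<ge> 0" "x \<ge> 0" "m + x \<le> Bi" "x \<ge> Bin"
    and opt: "\<And>s'. feasible_w Bi Bin s' \<Longrightarrow> payoff R0 lamS Nm Nf al s' (m',x') \<le> payoff R0 lamS Nm Nf al (m,x) (m',x')"
    unfolding BR_def feasible_w_def feasible_wo_def by auto
  have lt: "m + x < Bi" using f ne by simp
  have "x / (x+x') \<le> 1" using f x' Y by simp
  hence "al * (x/(x+x')) < 1" using al0 al1 f Y
  proof -
    have "al * (x/(x+x')) \<le> al * 1" using al0 \<open>x / (x+x') \<le> 1\<close> by (intro mult_left_mono) simp_all
    then show ?thesis using al1 by simp
  qed
  hence pos: "R0 * qS (x+x') * (1 - al*x/(x+x')) > 0" using R0 qS_pos[OF Y] by simp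
  obtain d where d: "d > 0" "\<And>h. h > 0 \<Longrightarrow> h < d \<Longrightarrow>
      payoff R0 lamS Nm Nf al (m, x+0) (m',x') < payoff R0 lamS Nm Nf al (m, x+(0+h)) (m',x')"
    using DERIV_pos_inc_right[OF deriv_S[OF Y, of m m'] pos] by auto
  define h where "h = min (d/2) ((Bi - m - x)/2)"
  have h: "h > 0" "h < d" "h \<le> (Bi - m - x)/2"
    using d lt by (simp_all add: h_def min_def)
  have "feasible_w Bi Bin (m, x+h)" unfolding feasible_w_def feasible_wo_def using f h by simp
  from opt[OF this] d(2)[OF h(1,2)] show False by simp
qed

lemma BR_MS:
  assumes br: "BR Bi Bin (m,x) (m',x')" and m: "m > 0" and X: "m + m' > 0" and Y: "x + x' > 0"
  shows "Gm x m (x+x') (m+m') \<le> 0"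
proof (rule ccontr)
  assume "\<not> Gm x m (x+x') (m+m') \<le> 0"
  hence pos: "R0 * Gm x m (x+x') (m+m') > 0" using R0 by simp
  from br have f: "m \<ge> 0" "x \<ge> 0" "m + x \<le> Bi" "x \<ge> Bin"
    and opt: "\<And>s'. feasible_w Bi Bin s' \<Longrightarrow> payoff R0 lamS Nm Nf al s' (m',x') \<le> payoff R0 lamS Nm Nf al (m,x) (m',x')"
    unfolding BR_def feasible_w_def feasible_wo_def by auto
  obtain d where d: "d > 0" "\<And>h. h > 0 \<Longrightarrow> h < d \<Longrightarrow>
      payoff R0 lamS Nm Nf al (m-0, x+0) (m',x') < payoff R0 lamS Nm Nf al (m-(0+h), x+(0+h)) (m',x')"
    using DERIV_pos_inc_right[OF deriv_MS[OF X Y] pos] by auto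
  define h where "h = min (d/2) m"
  have h: "h > 0" "h < d" "h \<le> m" unfolding h_def using d m by auto
  have "feasible_w Bi Bin (m-h, x+h)" unfolding feasible_w_def feasible_wo_def using f h by simp
  from opt[OF this] d(2)[OF h(1,2)] show False by simp
qed

lemma BR_SM:
  assumes br: "BR Bi Bin (m,x) (m',x')" and x: "x > Bin" and X: "m + m' > 0" and Y: "x + x' > 0"
    and Bin: "Bin \<ge> 0"
  shows "Gm x m (x+x') (m+m') \<ge> 0"
proof (rule ccontr)
  assume "\<not> Gm x m (x+x') (m+m') \<ge> 0"
  hence neg: "R0 * Gm x m (x+x') (m+m') < 0" using R0 by (simp add: mult_pos_neg)
  from br have f: "m \<ge> 0" "x \<ge> 0" "m + x \<le> Bi" "x \<ge> Bin"
    and opt: "\<And>s'. feasible_w Bi Bin s' \<Longrightarrow> payoff R0 lamS Nm Nf al s' (m',x') \<le> payoff R0 lamS Nm Nf al (m,x) (m',x')"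
    unfolding BR_def feasible_w_def feasible_wo_def by auto
  obtain d where d: "d > 0" "\<And>h. h > 0 \<Longrightarrow> h < d \<Longrightarrow>
      payoff R0 lamS Nm Nf al (m-0, x+0) (m',x') < payoff R0 lamS Nm Nf al (m-(0-h), x+(0-h)) (m',x')"
    using DERIV_neg_dec_left[OF deriv_MS[OF X Y] neg] by auto
  define h where "h = min (d/2) (x - Bin)"
  have h: "h > 0" "h < d" "h \<le> x - Bin" unfolding h_def using d x by auto
  have "feasible_w Bi Bin (m+h, x-h)" unfolding feasible_w_def feasible_wo_def using f h Bin by simp
  from opt[OF this] d(2)[OF h(1,2)] show False by simp
qed

lemma BR_M0:
  assumes br: "BR Bi Bin (0,x) (0,x')" and xB: "x = Bi" and BinB: "Bin < Bi" and x': "x' \<ge> 0"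
    and Bin: "Bin \<ge> 0"
  shows False
proof -
  from br have opt: "\<And>s'. feasible_w Bi Bin s' \<Longrightarrow> payoff R0 lamS Nm Nf al s' (0,x') \<le> payoff R0 lamS Nm Nf al (0,x) (0,x')"
    unfolding BR_def by auto
  have x0: "x > 0" using xB BinB Bin by simp
  have Y: "x + x' > 0" using x0 x' by simp
  define c where "c = qS (x+x')"
  have c0: "c > 0" unfolding c_def using qS_pos[OF Y] .
  define u0 where "u0 = c powr (-1/al)"
  have u0: "u0 > 0" unfolding u0_def using c0 by simp
  have u0c: "u0 powr (-al) = c" unfolding u0_def using c0 al0 by (simp add: powr_powr)
  define h where "h = min (x - Bin) (Nm/R0 * u0) / 2"
  have hpos: "h > 0" unfolding h_def using xB BinB Nm R0 u0 by simp
  have h1: "h < x - Bin" unfolding h_def using xB BinB by simp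
  have h2: "h*R0/Nm < u0"
  proof -
    have "h \<le> Nm/R0*u0/2" unfolding h_def by simp
    hence "h*R0 \<le> (Nm/R0*u0/2)*R0" using R0 by (intro mult_right_mono) simp_all
    also have "\<dots> = (u0/2)*Nm" using R0 by simp
    finally have "h*R0/Nm \<le> u0/2" using Nm by (simp add: pos_divide_le_eq)
    then show ?thesis using u0 by linarith
  qed
  have feas: "feasible_w Bi Bin (h, x-h)" unfolding feasible_w_def feasible_wo_def using hpos h1 Bin xB by simp
  have A: "(lamS*(x+x')*R0/Nf) powr (-al) \<le> (lamS*(x-h+x')*R0/Nf) powr (-al)"
    using hpos h1 Bin lamS R0 Nf al0 x'
    by (intro powr_mono2') (simp_all add: divide_right_mono)
  have B: "c < (h*R0/Nm) powr (-al)"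
    using powr_less_mono2_neg[of "-al" "h*R0/Nm" u0] h2 hpos R0 Nm al0 u0c by simp
  have p0: "payoff R0 lamS Nm Nf al (0,x) (0,x') = x*R0*c"
    unfolding payoff_def rateS_def rateM_def c_def qS_def by simp
  have "payoff R0 lamS Nm Nf al (h,x-h) (0,x') =
      (x-h)*R0*(lamS*(lamS*(x-h+x')*R0/Nf) powr (-al)) + h*R0*(h*R0/Nm) powr (-al)"
    unfolding payoff_def rateS_def rateM_def by (simp add: algebra_simps)
  also have "\<dots> > (x-h)*R0*c + h*R0*c"
  proof (rule add_le_less_mono)
    show "(x-h)*R0*c \<le> (x-h)*R0*(lamS*(lamS*(x-h+x')*R0/Nf) powr (-al))"
      unfolding c_def qS_def using A h1 Bin R0 lamS by (intro mult_left_mono) simp_all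
    show "h*R0*c < h*R0*(h*R0/Nm) powr (-al)" using B hpos R0 by simp
  qed
  finally have "payoff R0 lamS Nm Nf al (h,x-h) (0,x') > payoff R0 lamS Nm Nf al (0,x) (0,x')"
    unfolding p0 by (simp add: algebra_simps)
  with opt[OF feas] show False by simp
qed

lemma R_gt:
  assumes "X > 0" "Y > 0" "0 \<le> x" "x \<le> Y" "0 \<le> m" "m \<le> X"
    and "qM X < qS Y" "Gm x m Y X \<le> 0"
  shows "m*Y < x*X"
proof (rule ccontr)
  assume "\<not> m*Y < x*X"
  hence r: "x/Y \<le> m/X" using assms(1,2) by (simp add: field_simps)
  have A: "1 - al*m/X \<le> 1 - al*x/Y" using al0 mult_left_mono[OF r, of al] by simp
  have "m/X \<le> 1" using assms by simp
  hence "al*m/X \<le> al" using al0 mult_left_le[of "m/X" al] by simp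
  hence Bp: "1 - al*m/X > 0" using al1 by simp
  have "qM X * (1 - al*m/X) < qS Y * (1 - al*m/X)" using Bp assms(7) by simp
  also have "\<dots> \<le> qS Y * (1 - al*x/Y)" using A qS_pos[OF assms(2)] by (simp add: mult_left_mono)
  finally have "Gm x m Y X > 0" unfolding Gm_def by simp
  with assms(8) show False by simp
qed

lemma R_lt:
  assumes "X > 0" "Y > 0" "0 \<le> x" "x \<le> Y" "0 \<le> m" "m \<le> X"
    and "qS Y < qM X" "Gm x m Y X \<ge> 0"
  shows "x*X < m*Y"
proof (rule ccontr)
  assume "\<not> x*X < m*Y"
  hence r: "m/X \<le> x/Y" using assms(1,2) by (simp add: field_simps)
  have A: "1 - al*x/Y \<le> 1 - al*m/X" using al0 mult_left_mono[OF r, of al] by simp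
  have "x/Y \<le> 1" using assms by simp
  hence "al*x/Y \<le> al" using al0 mult_left_le[of "x/Y" al] by simp
  hence Bp: "1 - al*x/Y > 0" using al1 by simp
  have "qS Y * (1 - al*x/Y) < qM X * (1 - al*x/Y)" using Bp assms(7) by simp
  also have "\<dots> \<le> qM X * (1 - al*m/X)" using A qM_pos[OF assms(1)] by (simp add: mult_left_mono)
  finally have "Gm x m Y X < 0" unfolding Gm_def by simp
  with assms(8) show False by simp
qed

lemma R_eq1:
  assumes "X > 0" "Y > 0" "0 \<le> x" "x \<le> Y" "0 \<le> m" "m \<le> X"
    and "qS Y = qM X" "Gm x m Y X \<le> 0"
  shows "m*Y \<le> x*X"
proof (rule ccontr)
  assume "\<not> m*Y \<le> x*X"
  hence r: "x/Y < m/X" using assms(1,2) by (simp add: field_simps)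
  have A: "1 - al*m/X < 1 - al*x/Y" using al0 mult_strict_left_mono[OF r, of al] by simp
  have "qS Y * (1 - al*m/X) < qS Y * (1 - al*x/Y)" using A qS_pos[OF assms(2)] by simp
  hence "Gm x m Y X > 0" unfolding Gm_def using assms(7) by simp
  with assms(8) show False by simp
qed

lemma Gmono:
  assumes "0 < B'" "B' < Y" "0 < X" "X < X0"
    and "0 \<le> xn" "xn \<le> B'" "0 \<le> mo" "mo \<le> X0"
    and "xn*Y \<le> x*B'" "m*X0 \<le> mo*X"
  shows "Gm x m Y X < Gm xn mo B' X0"
proof -
  have Y0: "Y > 0" using assms by simp
  have r1: "xn/B' \<le> x/Y" using assms(1,2,9) by (simp add: field_simps)
  have a1: "1 - al*x/Y \<le> 1 - al*xn/B'" using al0 mult_left_mono[OF r1, of al] by simp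
  have r2: "m/X \<le> mo/X0" using assms(3,4,10) by (simp add: field_simps)
  have a2: "1 - al*mo/X0 \<le> 1 - al*m/X" using al0 mult_left_mono[OF r2, of al] by simp
  have "xn/B' \<le> 1" using assms by simp
  hence "al*xn/B' \<le> al" using al0 mult_left_le[of "xn/B'" al] by simp
  hence p1: "1 - al*xn/B' > 0" using al1 by simp
  have "mo/X0 \<le> 1" using assms by simp
  hence "al*mo/X0 \<le> al" using al0 mult_left_le[of "mo/X0" al] by simp
  hence p2: "1 - al*mo/X0 > 0" using al1 by simp
  have "qS Y * (1 - al*x/Y) \<le> qS Y * (1 - al*xn/B')" using a1 qS_pos[OF Y0] by (simp add: mult_left_mono)
  also have "\<dots> < qS B' * (1 - al*xn/B')" using p1 qS_mono[OF assms(1,2)] by simp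
  finally have s1: "qS Y * (1 - al*x/Y) < qS B' * (1 - al*xn/B')" .
  have "qM X0 * (1 - al*mo/X0) < qM X * (1 - al*mo/X0)" using p2 qM_mono[OF assms(3,4)] by simp
  also have "\<dots> \<le> qM X * (1 - al*m/X)" using a2 qM_pos[OF assms(3)] by (simp add: mult_left_mono)
  finally have s2: "qM X0 * (1 - al*mo/X0) < qM X * (1 - al*m/X)" .
  show ?thesis unfolding Gm_def using s1 s2 by simp
qed

end

locale ne = mdl +
  fixes B1o B2o B1n B2n a m1 x1 m2 x2 :: real
  assumes B1o: "B1o > 0" and B2o: "B2o > 0" and B1n: "B1n \<ge> 0" and B2n: "B2n \<ge> 0"
    and Bp: "B1n + B2n > 0" and a_def: "a = Nf * lamS powr (1/al - 1)"
    and NE: "is_NE_w R0 lamS Nm Nf al (B1o+B1n) (B2o+B2n) B1n B2n (m1,x1) (m2,x2)"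
begin

definition "Bn = B1n + B2n"
definition "Bo = B1o + B2o"
definition "Bt = Bo + Bn"
definition "X = m1 + m2"
definition "Y = x1 + x2"
definition "Xs = Bt*Nm/(Nm+a)"
definition "Ys = Bt*a/(Nm+a)"

lemma a_pos: "a > 0" unfolding a_def using Nf lamS by simp

lemma br1: "BR (B1o+B1n) B1n (m1,x1) (m2,x2)" and br2: "BR (B2o+B2n) B2n (m2,x2) (m1,x1)"
  using NE_BR[OF NE] by auto

lemma feas: "m1 \<ge> 0" "m2 \<ge> 0" "x1 \<ge> B1n" "x2 \<ge> B2n" "m1 + x1 \<le> B1o+B1n" "m2 + x2 \<le> B2o+B2n"
  using br1 br2 unfolding BR_def feasible_w_def feasible_wo_def by auto

lemma Ypos: "Y > 0" unfolding Y_def using feas Bp by simp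
lemma YB: "Y \<ge> Bn" unfolding Y_def Bn_def using feas by simp

lemma full: "m1 + x1 = B1o + B1n" "m2 + x2 = B2o + B2n"
proof -
  show "m1 + x1 = B1o + B1n" using BR_full[OF br1] feas B2n Ypos unfolding Y_def by simp
  show "m2 + x2 = B2o + B2n" using BR_full[OF br2] feas B1n Ypos unfolding Y_def by (simp add: add.commute)
qed

lemma Xpos: "X > 0"
proof (rule ccontr)
  assume "\<not> X > 0"
  hence "m1 = 0" "m2 = 0" using feas unfolding X_def by auto
  hence "BR (B1o+B1n) B1n (0,x1) (0,x2)" "x1 = B1o + B1n" using br1 full by auto
  then show False using BR_M0[of "B1o+B1n" B1n x1 x2] B1o B1n feas B2n by simp
qed

lemma XY: "X + Y = Bt" unfolding X_def Y_def Bt_def Bo_def Bn_def using full by simp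

lemma bnds: "0 \<le> x1" "x1 \<le> Y" "0 \<le> x2" "x2 \<le> Y" "m1 \<le> X" "m2 \<le> X"
  using feas B1n B2n unfolding X_def Y_def by auto

lemma G1a: "m1 > 0 \<Longrightarrow> Gm x1 m1 Y X \<le> 0"
  using BR_MS[OF br1] Xpos Ypos unfolding X_def Y_def by simp
lemma G1b: "x1 > B1n \<Longrightarrow> Gm x1 m1 Y X \<ge> 0"
  using BR_SM[OF br1] Xpos Ypos B1n unfolding X_def Y_def by simp
lemma G2a: "m2 > 0 \<Longrightarrow> Gm x2 m2 Y X \<le> 0"
  using BR_MS[OF br2] Xpos Ypos unfolding X_def Y_def by (simp add: add.commute)
lemma G2b: "x2 > B2n \<Longrightarrow> Gm x2 m2 Y X \<ge> 0"
  using BR_SM[OF br2] Xpos Ypos B2n unfolding X_def Y_def by (simp add: add.commute)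

lemma sumXY: "m1*Y + m2*Y = x1*X + x2*X"
  unfolding X_def Y_def by (simp add: algebra_simps)

lemma cmpXY: "qS Y < qM X \<longleftrightarrow> a*X < Nm*Y" "qS Y = qM X \<longleftrightarrow> a*X = Nm*Y"
  using cmp[OF a_def Xpos Ypos] by auto

lemma not_gt: "\<not> qM X < qS Y"
proof
  assume gt: "qM X < qS Y"
  have "m1*Y < x1*X"
  proof (cases "m1 > 0")
    case True then show ?thesis using R_gt[OF Xpos Ypos bnds(1,2) feas(1) bnds(5) gt G1a] by simp
  next
    case False
    hence "m1 = 0" using feas by simp
    moreover have "x1 > 0" using full \<open>m1 = 0\<close> B1o B1n by simp
    ultimately show ?thesis using Xpos by simp
  qed
  moreover have "m2*Y < x2*X"
  proof (cases "m2 > 0")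
    case True then show ?thesis using R_gt[OF Xpos Ypos bnds(3,4) feas(2) bnds(6) gt G2a] by simp
  next
    case False
    hence "m2 = 0" using feas by simp
    moreover have "x2 > 0" using full \<open>m2 = 0\<close> B2o B2n by simp
    ultimately show ?thesis using Xpos by simp
  qed
  ultimately show False using sumXY by simp
qed

lemma SW_NE: "SW R0 lamS Nm Nf al (m1,x1) (m2,x2) = F X Y"
  unfolding SW_F X_def Y_def by simp

lemma star: "Xs + Ys = Bt" "Xs > 0" "Ys > 0" "qS Ys = qM Xs"
proof -
  have Bt0: "Bt > 0" unfolding Bt_def Bo_def Bn_def using B1o B2o Bp by simp
  have "Nm + a > 0" using Nm a_pos by simp
  then show "Xs + Ys = Bt" unfolding Xs_def Ys_def
    by (simp add: add_divide_distrib[symmetric] distrib_left[symmetric])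
  show xs: "Xs > 0" unfolding Xs_def using Bt0 Nm a_pos by simp
  show ys: "Ys > 0" unfolding Ys_def using Bt0 Nm a_pos by simp
  have "a*Xs = Nm*Ys" unfolding Xs_def Ys_def by simp
  then show "qS Ys = qM Xs" using cmp(2)[OF a_def xs ys] by simp
qed

lemma bound_star:
  assumes "X' \<ge> 0" "Y' \<ge> 0" "X' + Y' \<le> Bt"
  shows "F X' Y' \<le> F Xs Ys"
proof -
  have "qM Xs * (X' - Xs) + qS Ys * (Y' - Ys) = qM Xs * (X' + Y' - (Xs + Ys))"
    using star(4) by (simp add: algebra_simps)
  also have "\<dots> = qM Xs * (X' + Y' - Bt)" using star(1) by simp
  also have "\<dots> \<le> 0" using assms qM_pos[OF star(2)] by (simp add: mult_nonneg_nonpos)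
  finally have "R0 * (qM Xs * (X' - Xs) + qS Ys * (Y' - Ys)) \<le> 0" using R0 by (simp add: mult_nonneg_nonpos)
  with F_tan[OF assms(1,2) star(2,3)] show ?thesis by simp
qed

lemma Sup_eqI:
  assumes "P s1 s2" "SW R0 lamS Nm Nf al s1 s2 = V"
    and "\<And>s1 s2. P s1 s2 \<Longrightarrow> SW R0 lamS Nm Nf al s1 s2 \<le> V"
  shows "Sup {SW R0 lamS Nm Nf al s1 s2 | s1 s2. P s1 s2} = V"
  by (rule cSup_eq_maximum) (use assms in blast)+

lemma SWwo_val: "SW_opt_wo R0 lamS Nm Nf al (B1o+B1n) (B2o+B2n) = F Xs Ys"
  unfolding SW_opt_wo_def
proof (rule Sup_eqI)
  let ?s1 = "((B1o+B1n)*Nm/(Nm+a), (B1o+B1n)*a/(Nm+a))"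
  let ?s2 = "((B2o+B2n)*Nm/(Nm+a), (B2o+B2n)*a/(Nm+a))"
  have p: "Nm + a > 0" using Nm a_pos by simp
  show "feasible_wo (B1o + B1n) ?s1 \<and> feasible_wo (B2o + B2n) ?s2"
    unfolding feasible_wo_def using p B1o B1n B2o B2n Nm a_pos
    by (simp add: add_divide_distrib[symmetric] distrib_left[symmetric])
  show "SW R0 lamS Nm Nf al ?s1 ?s2 = F Xs Ys"
    unfolding SW_F Xs_def Ys_def Bt_def Bo_def Bn_def by (simp add: add_divide_distrib[symmetric] algebra_simps)
  fix s1 s2 assume "feasible_wo (B1o + B1n) s1 \<and> feasible_wo (B2o + B2n) s2"
  then show "SW R0 lamS Nm Nf al s1 s2 \<le> F Xs Ys" unfolding SW_F feasible_wo_def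
    by (intro bound_star) (auto simp: Bt_def Bo_def Bn_def)
qed

lemma Ys_lt_iff:
  assumes "0 < Z"
  shows "Ys < Z \<longleftrightarrow> a*(Bt - Z) < Nm*Z"
proof -
  have p: "Nm + a > 0" using Nm a_pos by simp
  have "Ys < Z \<longleftrightarrow> Bt*a < Z*(Nm+a)" unfolding Ys_def using p by (simp add: pos_divide_less_eq)
  also have "\<dots> \<longleftrightarrow> a*(Bt - Z) < Nm*Z" by (simp add: algebra_simps)
  finally show ?thesis .
qed

lemma Ys_le_iff:
  assumes "0 < Z"
  shows "Z \<le> Ys \<longleftrightarrow> Nm*Z \<le> a*(Bt - Z)"
  using Ys_lt_iff[OF assms] by linarith

lemma Bt_eq: "Bt = Bo + Bn" unfolding Bt_def ..

lemma Bo_pos: "Bo > 0" unfolding Bo_def using B1o B2o by simp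
lemma Bn_pos: "Bn > 0" unfolding Bn_def using Bp by simp

lemma SWNE_le_star: "F X Y \<le> F Xs Ys"
  using bound_star[of X Y] Xpos Ypos XY by simp

lemma mid_lt:
  assumes "Ys < Z" "Z < Bt" "X' \<ge> 0" "X' + Z = Bt"
  shows "F X' Z < F Xs Ys"
proof -
  define Ym where "Ym = (Z + Ys)/2"
  define Xm where "Xm = Bt - Ym"
  have ym: "Ys < Ym" "Ym < Z" "Ym > 0" unfolding Ym_def using assms star by auto
  have xm: "Xm > 0" unfolding Xm_def using ym assms by simp
  have "a*(Bt - Ym) < Nm*Ym" using Ys_lt_iff[OF ym(3)] ym by simp
  hence "qS Ym < qM Xm" using cmp(1)[OF a_def xm ym(3)] unfolding Xm_def by simp
  hence "(Z - Ym)*(qS Ym - qM Xm) < 0" using ym by (simp add: mult_pos_neg)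
  hence "F X' Z < F Xm Ym"
    using F_strict[of X' Z Xm Ym] assms ym xm unfolding Xm_def by simp
  also have "\<dots> \<le> F Xs Ys" using bound_star[of Xm Ym] xm ym unfolding Xm_def by simp
  finally show ?thesis .
qed

lemma eq_iff_star: "F X Y = F Xs Ys \<longleftrightarrow> qS Y = qM X"
proof
  assume "qS Y = qM X"
  hence e: "a*X = Nm*Y" using cmpXY by simp
  have p: "Nm + a > 0" using Nm a_pos by simp
  have "X*(Nm+a) = Nm*Bt" using e XY[symmetric] by (simp add: algebra_simps)
  hence "X = Xs" unfolding Xs_def using p by (simp add: eq_divide_eq)
  moreover have "Y = Ys" using XY star(1) \<open>X = Xs\<close> by simp
  ultimately show "F X Y = F Xs Ys" by simp
next
  assume eq: "F X Y = F Xs Ys"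
  show "qS Y = qM X"
  proof (rule ccontr)
    assume "qS Y \<noteq> qM X"
    hence "qS Y < qM X" using not_gt by simp
    hence "a*X < Nm*Y" using cmpXY by simp
    moreover have "Bt - Y = X" using XY by simp
    ultimately have "a*(Bt-Y) < Nm*Y" by simp
    hence "Ys < Y" using Ys_lt_iff[OF Ypos] by simp
    moreover have "Y < Bt" using XY Xpos by simp
    ultimately have "F X Y < F Xs Ys" using mid_lt[of Y X] XY Xpos by simp
    with eq show False by simp
  qed
qed

lemma SWw_val2:
  assumes T: "Nm*Bn \<le> a*Bo"
  shows "SW_opt_w R0 lamS Nm Nf al (B1o+B1n) (B2o+B2n) B1n B2n = F Xs Ys"
  unfolding SW_opt_w_def
proof (rule Sup_eqI)
  define d where "d = (Ys - Bn)/Bo"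
  have "Bn \<le> Ys" using Ys_le_iff[OF Bn_pos] T Bt_eq by simp
  hence d0: "d \<ge> 0" unfolding d_def using Bo_pos by simp
  have "Ys \<le> Bt" using star by simp
  hence d1: "d \<le> 1" unfolding d_def using Bo_pos Bt_eq by simp
  let ?s1 = "(B1o*(1-d), B1n + d*B1o)"
  let ?s2 = "(B2o*(1-d), B2n + d*B2o)"
  show "feasible_w (B1o + B1n) B1n ?s1 \<and> feasible_w (B2o + B2n) B2n ?s2"
    unfolding feasible_w_def feasible_wo_def using d0 d1 B1o B2o B1n B2n
    by (simp add: algebra_simps)
  have e1: "B1o*(1-d) + B2o*(1-d) = Xs"
  proof -
    have "B1o*(1-d) + B2o*(1-d) = Bo - d*Bo" unfolding Bo_def by (simp add: algebra_simps)
    also have "\<dots> = Bo - (Ys - Bn)" unfolding d_def using Bo_pos by simp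
    also have "\<dots> = Xs" using star(1) Bt_eq by simp
    finally show ?thesis .
  qed
  have e2: "B1n + d*B1o + (B2n + d*B2o) = Ys"
  proof -
    have "B1n + d*B1o + (B2n + d*B2o) = Bn + d*Bo" unfolding Bo_def Bn_def by (simp add: algebra_simps)
    also have "\<dots> = Ys" unfolding d_def using Bo_pos by simp
    finally show ?thesis .
  qed
  show "SW R0 lamS Nm Nf al ?s1 ?s2 = F Xs Ys" unfolding SW_F using e1 e2 by simp
  fix s1 s2 assume "feasible_w (B1o + B1n) B1n s1 \<and> feasible_w (B2o + B2n) B2n s2"
  then show "SW R0 lamS Nm Nf al s1 s2 \<le> F Xs Ys" unfolding SW_F feasible_w_def feasible_wo_def
    by (intro bound_star) (auto simp: Bt_def Bo_def Bn_def)
qed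

lemma full_mx: "m1 = B1o + B1n - x1" "m2 = B2o + B2n - x2" using full by simp_all

lemma star_iff_interval:
  assumes T: "Nm*Bn \<le> a*Bo"
  shows "qS Y = qM X \<longleftrightarrow> (B1n*Nm \<le> B1o*a \<and> B2n*Nm \<le> B2o*a)"
proof
  assume eqq: "qS Y = qM X"
  hence e: "a*X = Nm*Y" using cmpXY by simp
  have c1: "x1*X \<le> m1*Y"
  proof (rule ccontr)
    assume "\<not> x1*X \<le> m1*Y"
    hence l: "x2*X < m2*Y" using sumXY by simp
    have "x2*X \<ge> 0" using bnds Xpos by simp
    hence "m2 > 0" using l feas(2) by (cases "m2 = 0") auto
    from R_eq1[OF Xpos Ypos bnds(3,4) feas(2) bnds(6) eqq G2a[OF this]] l show False by simp
  qed
  have c2: "x2*X \<le> m2*Y"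
  proof (rule ccontr)
    assume "\<not> x2*X \<le> m2*Y"
    hence l: "x1*X < m1*Y" using sumXY by simp
    have "x1*X \<ge> 0" using bnds Xpos by simp
    hence "m1 > 0" using l feas(1) by (cases "m1 = 0") auto
    from R_eq1[OF Xpos Ypos bnds(1,2) feas(1) bnds(5) eqq G1a[OF this]] l show False by simp
  qed
  have k: "x*Nm \<le> m*a" if "x*X \<le> m*Y" for x m
  proof -
    have "X*(x*Nm) = Nm*(x*X)" by simp
    also have "\<dots> \<le> Nm*(m*Y)" using that Nm by simp
    also have "\<dots> = X*(m*a)" using e by (simp add: algebra_simps)
    finally show ?thesis using Xpos by simp
  qed
  have "B1n*Nm \<le> x1*Nm" using feas Nm by simp
  also have "\<dots> \<le> m1*a" using k[OF c1] .
  also have "\<dots> \<le> B1o*a" using full_mx feas a_pos by simp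
  finally have i1: "B1n*Nm \<le> B1o*a" .
  have "B2n*Nm \<le> x2*Nm" using feas Nm by simp
  also have "\<dots> \<le> m2*a" using k[OF c2] .
  also have "\<dots> \<le> B2o*a" using full_mx feas a_pos by simp
  finally have i2: "B2n*Nm \<le> B2o*a" .
  show "B1n*Nm \<le> B1o*a \<and> B2n*Nm \<le> B2o*a" using i1 i2 by simp
next
  assume iv: "B1n*Nm \<le> B1o*a \<and> B2n*Nm \<le> B2o*a"
  show "qS Y = qM X"
  proof (rule ccontr)
    assume "qS Y \<noteq> qM X"
    hence lt: "qS Y < qM X" using not_gt by simp
    hence aX: "a*X < Nm*Y" using cmpXY by simp
    have k: False if xs: "x*X > m*Y" and xn: "x = Bn'" and mo: "m = Bo'" and bo: "Bo' > 0"
      and iv': "Bn'*Nm \<le> Bo'*a" for x m Bn' Bo'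
    proof -
      have h1: "Bo'*a*X < Bo'*Nm*Y" using mult_strict_left_mono[OF aX bo] by (simp add: mult.assoc)
      have h2: "Bn'*Nm*X \<le> Bo'*a*X" using iv' Xpos by (simp add: mult_right_mono)
      have "Bn'*Nm*X < Bo'*Nm*Y" by (rule le_less_trans[OF h2 h1])
      hence "Nm*(Bo'*Y) > Nm*(Bn'*X)" by (simp add: ac_simps)
      hence "Bo'*Y > Bn'*X" using Nm by simp
      with xs xn mo show False by (simp add: algebra_simps)
    qed
    consider "x1 > B1n" "x2 > B2n" | "x1 > B1n" "x2 = B2n" | "x1 = B1n" "x2 > B2n" | "x1 = B1n" "x2 = B2n"
      using feas by linarith
    then show False
    proof cases
      case 1
      have "x1*X < m1*Y" using R_lt[OF Xpos Ypos bnds(1,2) feas(1) bnds(5) lt G1b[OF 1(1)]] .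
      moreover have "x2*X < m2*Y" using R_lt[OF Xpos Ypos bnds(3,4) feas(2) bnds(6) lt G2b[OF 1(2)]] .
      ultimately show False using sumXY by simp
    next
      case 2
      have "x1*X < m1*Y" using R_lt[OF Xpos Ypos bnds(1,2) feas(1) bnds(5) lt G1b[OF 2(1)]] .
      hence "x2*X > m2*Y" using sumXY by simp
      moreover have "m2 = B2o" using 2 full_mx by simp
      ultimately show False using k[where x=x2 and m=m2 and Bn'=B2n and Bo'=B2o] 2(2) B2o iv by blast
    next
      case 3
      have "x2*X < m2*Y" using R_lt[OF Xpos Ypos bnds(3,4) feas(2) bnds(6) lt G2b[OF 3(2)]] .
      hence "x1*X > m1*Y" using sumXY by simp
      moreover have "m1 = B1o" using 3 full_mx by simp
      ultimately show False using k[where x=x1 and m=m1 and Bn'=B1n and Bo'=B1o] 3(1) B1o iv by blast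
    next
      case 4
      hence "Y = Bn" "X = Bo" using XY Bt_eq unfolding Y_def Bn_def by simp_all
      then show False using aX T by simp
    qed
  qed
qed

context
  assumes T1: "a*Bo < Nm*Bn"
begin

lemma q1: "qS Bn < qM Bo" using cmp(1)[OF a_def Bo_pos Bn_pos] T1 by simp

lemma bound1:
  assumes "X' \<ge> 0" "Y' \<ge> Bn" "X' + Y' \<le> Bt"
  shows "F X' Y' \<le> F Bo Bn"
proof -
  have y: "Y' \<ge> 0" using assms Bn_pos by simp
  have "qM Bo * (X' - Bo) \<le> qM Bo * (Bn - Y')" using assms Bt_eq qM_pos[OF Bo_pos]
    by (intro mult_left_mono) simp_all
  hence "qM Bo * (X' - Bo) + qS Bn * (Y' - Bn) \<le> (Y' - Bn) * (qS Bn - qM Bo)"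
    by (simp add: algebra_simps)
  also have "\<dots> \<le> 0" using assms q1 by (simp add: mult_nonneg_nonpos)
  finally have "R0 * (qM Bo * (X' - Bo) + qS Bn * (Y' - Bn)) \<le> 0" using R0 by (simp add: mult_nonneg_nonpos)
  with F_tan[OF assms(1) y Bo_pos Bn_pos] show ?thesis by simp
qed

lemma strict1:
  assumes "X' \<ge> 0" "Y' > Bn" "X' + Y' = Bt"
  shows "F X' Y' < F Bo Bn"
proof -
  have "(Y' - Bn) * (qS Bn - qM Bo) < 0" using assms q1 by (simp add: mult_pos_neg)
  then show ?thesis using F_strict[OF assms(1) _ Bo_pos Bn_pos] assms Bt_eq Bn_pos by simp
qed

lemma SWw_val1: "SW_opt_w R0 lamS Nm Nf al (B1o+B1n) (B2o+B2n) B1n B2n = F Bo Bn"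
  unfolding SW_opt_w_def
proof (rule Sup_eqI)
  show "feasible_w (B1o + B1n) B1n (B1o, B1n) \<and> feasible_w (B2o + B2n) B2n (B2o, B2n)"
    unfolding feasible_w_def feasible_wo_def using B1o B2o B1n B2n by simp
  show "SW R0 lamS Nm Nf al (B1o, B1n) (B2o, B2n) = F Bo Bn" unfolding SW_F Bo_def Bn_def by simp
  fix s1 s2 assume "feasible_w (B1o + B1n) B1n s1 \<and> feasible_w (B2o + B2n) B2n s2"
  then show "SW R0 lamS Nm Nf al s1 s2 \<le> F Bo Bn" unfolding SW_F feasible_w_def feasible_wo_def
    by (intro bound1) (auto simp: Bt_def Bo_def Bn_def)
qed

lemma SWNE_le1: "F X Y \<le> F Bo Bn"
  using bound1[of X Y] Xpos YB XY by simp

lemma F1_lt: "F Bo Bn < F Xs Ys"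
proof -
  have h1: "Bt - Bn = Bo" using Bt_eq by simp
  have y: "Ys < Bn" using Ys_lt_iff[OF Bn_pos] T1 unfolding h1 by simp
  have b: "Bn < Bt" using Bt_eq Bo_pos by simp
  have c: "Bo + Bn = Bt" using Bt_eq by simp
  show ?thesis using Bo_pos by (intro mid_lt[OF y b _ c]) simp
qed

lemma part1_iff: "F X Y = F Bo Bn \<longleftrightarrow> (Gm B1n B1o Bn Bo \<le> 0 \<and> Gm B2n B2o Bn Bo \<le> 0)"
proof
  assume eq: "F X Y = F Bo Bn"
  have "Y = Bn"
  proof (rule ccontr)
    assume "Y \<noteq> Bn"
    hence "Y > Bn" using YB by simp
    then show False using strict1[of X Y] Xpos XY eq by simp
  qed
  hence x: "x1 = B1n" "x2 = B2n" using feas unfolding Y_def Bn_def by linarith+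
  hence m: "m1 = B1o" "m2 = B2o" using full by simp_all
  have X: "X = Bo" unfolding X_def Bo_def using m by simp
  show "Gm B1n B1o Bn Bo \<le> 0 \<and> Gm B2n B2o Bn Bo \<le> 0"
    using G1a G2a B1o B2o x m X \<open>Y = Bn\<close> by simp
next
  assume cond: "Gm B1n B1o Bn Bo \<le> 0 \<and> Gm B2n B2o Bn Bo \<le> 0"
  have "Y = Bn"
  proof (rule ccontr)
    assume "Y \<noteq> Bn"
    hence YB': "Y > Bn" using YB by simp
    have Xlt: "X < Bo" using XY Bt_eq YB' by simp
    have "a*X < a*Bo" using Xlt a_pos by simp
    also have "\<dots> < Nm*Bn" using T1 .
    also have "\<dots> < Nm*Y" using YB' Nm by simp
    finally have "qS Y < qM X" using cmpXY by simp
    note lt = this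
    consider "x1 > B1n" "x2 > B2n" | "x1 > B1n" "x2 = B2n" | "x1 = B1n" "x2 > B2n" | "x1 = B1n" "x2 = B2n"
      using feas by linarith
    then show False
    proof cases
      case 1
      have "x1*X < m1*Y" using R_lt[OF Xpos Ypos bnds(1,2) feas(1) bnds(5) lt G1b[OF 1(1)]] .
      moreover have "x2*X < m2*Y" using R_lt[OF Xpos Ypos bnds(3,4) feas(2) bnds(6) lt G2b[OF 1(2)]] .
      ultimately show False using sumXY by simp
    next
      case 2
      have "x1*Bn - B1n*Y = B2n*(Y - Bn)" unfolding Y_def Bn_def using 2(2) by (simp add: algebra_simps)
      moreover have "0 \<le> B2n*(Y - Bn)" using B2n YB' by simp
      ultimately have c1: "B1n*Y \<le> x1*Bn" by linarith
      have m2e: "m2 = B2o" using 2(2) full(2) by simp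
      have m1e: "m1 = B1o + B1n - x1" using full(1) by simp
      have "B1o*X - m1*Bo = B2o*(Y - Bn)" unfolding X_def Y_def Bo_def Bn_def unfolding m2e m1e 2(2)
        by (simp add: algebra_simps)
      moreover have "0 \<le> B2o*(Y - Bn)" using B2o YB' by simp
      ultimately have c2: "m1*Bo \<le> B1o*X" by linarith
      have "Gm x1 m1 Y X < Gm B1n B1o Bn Bo"
        using Gmono[OF Bn_pos YB' Xpos Xlt B1n _ _ _ c1 c2] B1o B2o B1n B2n Bo_def Bn_def by simp
      then show False using G1b[OF 2(1)] cond by simp
    next
      case 3
      have "x2*Bn - B2n*Y = B1n*(Y - Bn)" unfolding Y_def Bn_def using 3(1) by (simp add: algebra_simps)
      moreover have "0 \<le> B1n*(Y - Bn)" using B1n YB' by simp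
      ultimately have c1: "B2n*Y \<le> x2*Bn" by linarith
      have m1e: "m1 = B1o" using 3(1) full(1) by simp
      have m2e: "m2 = B2o + B2n - x2" using full(2) by simp
      have "B2o*X - m2*Bo = B1o*(Y - Bn)" unfolding X_def Y_def Bo_def Bn_def unfolding m2e m1e 3(1)
        by (simp add: algebra_simps)
      moreover have "0 \<le> B1o*(Y - Bn)" using B1o YB' by simp
      ultimately have c2: "m2*Bo \<le> B2o*X" by linarith
      have "Gm x2 m2 Y X < Gm B2n B2o Bn Bo"
        using Gmono[OF Bn_pos YB' Xpos Xlt B2n _ _ _ c1 c2] B1o B2o B1n B2n Bo_def Bn_def by simp
      then show False using G2b[OF 3(2)] cond by simp
    next
      case 4
      hence "Y = Bn" unfolding Y_def Bn_def by simp
      then show False using YB' by simp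
    qed
  qed
  moreover have "X = Bo" using XY Bt_eq \<open>Y = Bn\<close> by simp
  ultimately show "F X Y = F Bo Bn" by simp
qed

end

end

theorem theorem4:
  fixes B1o B2o B B1n B2n R0 lamS Nm Nf al a T RS0 RM0 SWNE SWw SWwo :: real
    and s1 s2 :: strat
  assumes B1o: "B1o > 0" and B2o: "B2o > 0" and B: "B > 0"
    and B1n: "B1n \<ge> 0" and B2n: "B2n \<ge> 0" and Bsum: "B1n + B2n = B"
    and R0: "R0 > 0" and lamS: "lamS > 1" and Nm: "Nm > 0" and Nf: "Nf > 0"
    and al: "0 < al" "al < 1"
    and NE: "is_NE_w R0 lamS Nm Nf al (B1o + B1n) (B2o + B2n) B1n B2n s1 s2"
    and a_def: "a = Nf * lamS powr (1 / al - 1)"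
    and T_def: "T = (B1o + B2o) * a / Nm"
    and RS0_def: "RS0 = lamS * (B1n + B2n) * R0 / Nf"
    and RM0_def: "RM0 = (B1o + B2o) * R0 / Nm"
    and SWNE_def: "SWNE = SW R0 lamS Nm Nf al s1 s2"
    and SWw_def: "SWw = SW_opt_w R0 lamS Nm Nf al (B1o + B1n) (B2o + B2n) B1n B2n"
    and SWwo_def: "SWwo = SW_opt_wo R0 lamS Nm Nf al (B1o + B1n) (B2o + B2n)"
  shows "(B > T \<longrightarrow>
            SWNE \<le> SWw \<and> SWw < SWwo \<and>
            (SWNE = SWw \<longleftrightarrow>
               (lamS * RS0 powr (- al) - RM0 powr (- al)
                  - al * lamS\<^sup>2 * B1n * R0 / Nf * RS0 powr (- al - 1)
                  + al * B1o * R0 / Nm * RM0 powr (- al - 1) \<le> 0) \<and>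
               (lamS * RS0 powr (- al) - RM0 powr (- al)
                  - al * lamS\<^sup>2 * B2n * R0 / Nf * RS0 powr (- al - 1)
                  + al * B2o * R0 / Nm * RM0 powr (- al - 1) \<le> 0)))
       \<and> (B \<le> T \<longrightarrow>
            SWNE \<le> SWw \<and> SWw = SWwo \<and>
            ((SWNE = SWw \<and> SWw = SWwo) \<longleftrightarrow>
               (B - B2o * a / Nm \<le> B1n \<and> B1n \<le> B1o * a / Nm \<and> B2n = B - B1n)))"
proof -
  obtain m1 x1 where s1: "s1 = (m1,x1)" by (cases s1)
  obtain m2 x2 where s2: "s2 = (m2,x2)" by (cases s2)
  interpret ne R0 lamS Nm Nf al B1o B2o B1n B2n a m1 x1 m2 x2
    by unfold_locales (use R0 lamS Nm Nf al B1o B2o B1n B2n Bsum B a_def NE s1 s2 in auto)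
  have BnB: "Bn = B" unfolding Bn_def using Bsum .
  have SWNE: "SWNE = F X Y" unfolding SWNE_def s1 s2 using SW_NE .
  have SWwo: "SWwo = F Xs Ys" unfolding SWwo_def using SWwo_val .
  have Tiff: "B > T \<longleftrightarrow> a*Bo < Nm*Bn"
    unfolding T_def BnB Bo_def using Nm by (simp add: pos_divide_less_eq mult.commute)
  have c1: "(lamS * RS0 powr (- al) - RM0 powr (- al)
                  - al * lamS\<^sup>2 * B1n * R0 / Nf * RS0 powr (- al - 1)
                  + al * B1o * R0 / Nm * RM0 powr (- al - 1) \<le> 0) \<longleftrightarrow> Gm B1n B1o Bn Bo \<le> 0"
    unfolding RS0_def RM0_def using G_eq[of "B1n+B2n" "B1o+B2o" B1n B1o] Bn_pos Bo_pos
    unfolding Bn_def Bo_def by simp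
  have c2: "(lamS * RS0 powr (- al) - RM0 powr (- al)
                  - al * lamS\<^sup>2 * B2n * R0 / Nf * RS0 powr (- al - 1)
                  + al * B2o * R0 / Nm * RM0 powr (- al - 1) \<le> 0) \<longleftrightarrow> Gm B2n B2o Bn Bo \<le> 0"
    unfolding RS0_def RM0_def using G_eq[of "B1n+B2n" "B1o+B2o" B2n B2o] Bn_pos Bo_pos
    unfolding Bn_def Bo_def by simp
  have P1: "SWNE \<le> SWw \<and> SWw < SWwo \<and>
            (SWNE = SWw \<longleftrightarrow>
               (lamS * RS0 powr (- al) - RM0 powr (- al)
                  - al * lamS\<^sup>2 * B1n * R0 / Nf * RS0 powr (- al - 1)
                  + al * B1o * R0 / Nm * RM0 powr (- al - 1) \<le> 0) \<and>
               (lamS * RS0 powr (- al) - RM0 powr (- al)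
                  - al * lamS\<^sup>2 * B2n * R0 / Nf * RS0 powr (- al - 1)
                  + al * B2o * R0 / Nm * RM0 powr (- al - 1) \<le> 0))" if BT: "B > T"
  proof -
    have T1: "a*Bo < Nm*Bn" using BT Tiff by simp
    have SWw: "SWw = F Bo Bn" unfolding SWw_def using SWw_val1[OF T1] .
    show ?thesis unfolding SWNE SWw SWwo c1 c2
      using SWNE_le1[OF T1] F1_lt[OF T1] part1_iff[OF T1] by simp
  qed
  have P2: "SWNE \<le> SWw \<and> SWw = SWwo \<and>
            ((SWNE = SWw \<and> SWw = SWwo) \<longleftrightarrow>
               (B - B2o * a / Nm \<le> B1n \<and> B1n \<le> B1o * a / Nm \<and> B2n = B - B1n))" if BT: "B \<le> T"
  proof -
    have T2: "Nm*Bn \<le> a*Bo" using BT Tiff by simp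
    have SWw: "SWw = F Xs Ys" unfolding SWw_def using SWw_val2[OF T2] .
    have i1: "B1n \<le> B1o * a / Nm \<longleftrightarrow> B1n*Nm \<le> B1o*a" using Nm by (simp add: pos_le_divide_eq)
    have i2: "B - B2o * a / Nm \<le> B1n \<longleftrightarrow> B2n*Nm \<le> B2o*a"
    proof -
      have "B - B2o * a / Nm \<le> B1n \<longleftrightarrow> B2n \<le> B2o * a / Nm" using Bsum by linarith
      also have "\<dots> \<longleftrightarrow> B2n*Nm \<le> B2o*a" using Nm by (simp add: pos_le_divide_eq)
      finally show ?thesis .
    qed
    have i3: "B2n = B - B1n" using Bsum by simp
    show ?thesis unfolding SWNE SWw SWwo i1 i2
      using SWNE_le_star eq_iff_star star_iff_interval[OF T2] i3 by auto
  qed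
  show ?thesis using P1 P2 by blast
qed

end
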